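(* For every $f\in\mathcal H_{(reg)}(X)$ there is a constant ${\rm Cst}$ such that the Lorentzian Fourier-Helgason transforms satisfy, for all $\xi\in C^+$ and $\nu\in\mathbb R$, $$|\tilde f_{\pm,\nu}(\xi)|\le{\rm Cst}\,\xi_0^{-1/2}\max(e^{\pm\pi\nu},1).$$
   Context: $[z\cdot z']=z_0z'_0-z_1z'_1-z_2z'_2$, $z^2=[z\cdot z]$; $X=\{x\in\mathbb R^3:x^2=-1\}$; ${\rm d}\sigma(x)=\frac{{\rm d}x_1{\rm d}x_2}{2|x_0|}$; $C^+=\{\xi\in\mathbb R^3\setminus\{0\}:\xi^2=0,\xi_0>0\}$. Parametrization $z(\lambda,\mu)=\big(\frac{1+\lambda\mu}{\lambda-\mu},\frac{1-\lambda\mu}{\lambda-\mu},\frac{\lambda+\mu}{\lambda-\mu}\big)$. $\mathcal H_{(reg)}(X)$: functions $f\in L^2(X,{\rm d}\sigma)$ with $|(\lambda-\mu)^{-1}f(z(\lambda,\mu))|\le c(1+|\lambda|)^{-1}(1+|\mu|)^{-1}$ for all real $\lambda\ne\mu$. Powers: for real $t\neq0$, $t_\pm^s=Y(t)|t|^s+e^{\pm i\pi s}Y(-t)|t|^s$ ($Y$ Heaviside). Lorentzian FH transforms: $\tilde f_{\pm,\nu}(\xi)=\int_X([x\cdot\xi])_\pm^{-\frac12-i\nu}f(x)\,{\rm d}\sigma(x)$. *)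

theory Defs
  imports "HOL-Analysis.Analysis"
begin

type_synonym pt3 = "real \<times> real \<times> real"

definition lform :: "pt3 \<Rightarrow> pt3 \<Rightarrow> real" where
  "lform z w = (case z of (z0, z1, z2) \<Rightarrow> case w of (w0, w1, w2) \<Rightarrow>
      z0 * w0 - z1 * w1 - z2 * w2)"

definition Xset :: "pt3 set" where
  "Xset = {x. lform x x = -1}"

definition Cplus :: "pt3 set" where
  "Cplus = {xi. xi \<noteq> (0,0,0) \<and> lform xi xi = 0 \<and> fst xi > 0}"

definition zpar :: "real \<Rightarrow> real \<Rightarrow> pt3" where
  "zpar l m = ((1 + l*m)/(l - m), (1 - l*m)/(l - m), (l + m)/(l - m))"

text \<open>The measure d sigma = dx1 dx2 / (2|x0|) on X: X is the union of two graphs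
  x0 = +sqrt(x1^2+x2^2-1) and x0 = -sqrt(x1^2+x2^2-1) over {x1^2+x2^2>1}
  (the circle x1^2+x2^2=1 is a null set); both sheets carry the density
  1/(2|x0|) with respect to Lebesgue measure dx1 dx2.\<close>
definition mu2 :: "(real \<times> real) measure" where
  "mu2 = density lborel (\<lambda>(a, b). if a^2 + b^2 > 1
            then ennreal (1 / (2 * sqrt (a^2 + b^2 - 1))) else 0)"

definition up :: "real \<times> real \<Rightarrow> pt3" where
  "up p = (case p of (a, b) \<Rightarrow> (sqrt (a^2 + b^2 - 1), a, b))"

definition dn :: "real \<times> real \<Rightarrow> pt3" where
  "dn p = (case p of (a, b) \<Rightarrow> (- sqrt (a^2 + b^2 - 1), a, b))"

definition intX :: "(pt3 \<Rightarrow> complex) \<Rightarrow> complex" where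
  "intX g = (LINT p|mu2. g (up p)) + (LINT p|mu2. g (dn p))"

definition L2X :: "(pt3 \<Rightarrow> complex) \<Rightarrow> bool" where
  "L2X f \<longleftrightarrow> (\<lambda>p. f (up p)) \<in> borel_measurable mu2 \<and> (\<lambda>p. f (dn p)) \<in> borel_measurable mu2
     \<and> integrable mu2 (\<lambda>p. (cmod (f (up p)))^2)
     \<and> integrable mu2 (\<lambda>p. (cmod (f (dn p)))^2)"

definition Hreg :: "(pt3 \<Rightarrow> complex) set" where
  "Hreg = {f. L2X f \<and> (\<exists>c. \<forall>l m. l \<noteq> m \<longrightarrow>
      cmod (f (zpar l m)) / \<bar>l - m\<bar> \<le> c / ((1 + \<bar>l\<bar>) * (1 + \<bar>m\<bar>)))}"

text \<open>t_{eps}^s for eps = 1 (the + sign) or eps = -1 (the - sign):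
  Y(t)|t|^s + e^{eps i pi s} Y(-t)|t|^s, with value 0 at t = 0 (a null set).\<close>
definition pmpow :: "real \<Rightarrow> real \<Rightarrow> complex \<Rightarrow> complex" where
  "pmpow eps t s = (if t > 0 then exp (s * of_real (ln t))
     else if t < 0 then exp (of_real eps * \<i> * of_real pi * s) * exp (s * of_real (ln (- t)))
     else 0)"

definition FH :: "real \<Rightarrow> real \<Rightarrow> (pt3 \<Rightarrow> complex) \<Rightarrow> pt3 \<Rightarrow> complex" where
  "FH eps nu f xi = intX (\<lambda>x. pmpow eps (lform x xi) (- 1/2 - \<i> * of_real nu) * f x)"

end

theory Submission
  imports Defs
begin

lemma nn_reflect:
  fixes g :: "real \<Rightarrow> ennreal" assumes [measurable]: "g \<in> borel_measurable borel"
  shows "(\<integral>\<^sup>+x. g (- x) \<partial>lborel) = (\<integral>\<^sup>+x. g x \<partial>lborel)"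
  using nn_integral_real_affine[OF assms, of "-1" 0] by simp

lemma nn_translate:
  fixes g :: "real \<Rightarrow> ennreal" assumes [measurable]: "g \<in> borel_measurable borel"
  shows "(\<integral>\<^sup>+x. g (x + a) \<partial>lborel) = (\<integral>\<^sup>+x. g x \<partial>lborel)"
  using nn_integral_real_affine[OF assms, of 1 a] by (simp add: add.commute)

lemma powr_int_0:
  fixes al r :: real assumes "0 \<le> al" "al < 1" "0 \<le> r"
  shows "(\<integral>\<^sup>+x. ennreal (x powr (-al)) * indicator {0..r} x \<partial>lborel) = ennreal (r powr (1-al)/(1-al))"
proof -
  have "((\<lambda>x. x powr (-al)) has_integral (r powr (-al+1)/(-al+1))) {0..r}"
    by (rule has_integral_powr_from_0) (use assms in auto)
  from nn_integral_has_integral_lebesgue'[OF _ this] show ?thesis by simp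
qed

lemma powr_int_inf:
  fixes be r :: real assumes "1 < be" "0 < r"
  shows "(\<integral>\<^sup>+x. ennreal (x powr (-be)) * indicator {r..} x \<partial>lborel) = ennreal (r powr (1-be)/(be-1))"
proof -
  have "((\<lambda>x. x powr (-be)) has_integral (-(r powr (-be+1)) / (-be+1))) {r..}"
    by (rule has_integral_powr_to_inf) (use assms in auto)
  moreover have "-(r powr (-be+1)) / (-be+1) = r powr (1-be)/(be-1)"
    using assms by (simp add: field_simps)
  ultimately have "((\<lambda>x. x powr (-be)) has_integral (r powr (1-be)/(be-1))) {r..}" by simp
  from nn_integral_has_integral_lebesgue'[OF _ this] show ?thesis by simp
qed

lemma sym0_fin:
  fixes al r :: real assumes "0 \<le> al" "al < 1" "0 \<le> r"
  shows "(\<integral>\<^sup>+x. ennreal (\<bar>x\<bar> powr (-al)) * indicator {x. \<bar>x\<bar> \<le> r} x \<partial>lborel) < \<infinity>"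
proof -
  let ?g = "\<lambda>x::real. ennreal (x powr (-al)) * indicator {0..r} x"
  have m[measurable]: "?g \<in> borel_measurable borel" by measurable
  have "(\<integral>\<^sup>+x. ennreal (\<bar>x\<bar> powr (-al)) * indicator {x. \<bar>x\<bar> \<le> r} x \<partial>lborel)
     \<le> (\<integral>\<^sup>+x. ?g x + ?g (-x) \<partial>lborel)"
    by (intro nn_integral_mono) (auto split: split_indicator)
  also have "\<dots> = (\<integral>\<^sup>+x. ?g x \<partial>lborel) + (\<integral>\<^sup>+x. ?g (-x) \<partial>lborel)"
    by (rule nn_integral_add) measurable
  also have "\<dots> = ennreal (r powr (1-al)/(1-al)) + ennreal (r powr (1-al)/(1-al))"
    using nn_reflect[OF m] powr_int_0[OF assms] by simp
  also have "\<dots> < \<infinity>" by simp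
  finally show ?thesis .
qed

lemma tail_fin:
  fixes be r :: real assumes "1 < be" "0 < r"
  shows "(\<integral>\<^sup>+x. ennreal (\<bar>x\<bar> powr (-be)) * indicator {x. r \<le> \<bar>x\<bar>} x \<partial>lborel) < \<infinity>"
proof -
  let ?g = "\<lambda>x::real. ennreal (x powr (-be)) * indicator {r..} x"
  have m[measurable]: "?g \<in> borel_measurable borel" by measurable
  have "(\<integral>\<^sup>+x. ennreal (\<bar>x\<bar> powr (-be)) * indicator {x. r \<le> \<bar>x\<bar>} x \<partial>lborel)
     \<le> (\<integral>\<^sup>+x. ?g x + ?g (-x) \<partial>lborel)"
    using assms by (intro nn_integral_mono) (auto split: split_indicator)
  also have "\<dots> = (\<integral>\<^sup>+x. ?g x \<partial>lborel) + (\<integral>\<^sup>+x. ?g (-x) \<partial>lborel)"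
    by (rule nn_integral_add) measurable
  also have "\<dots> = ennreal (r powr (1-be)/(be-1)) + ennreal (r powr (1-be)/(be-1))"
    using nn_reflect[OF m] powr_int_inf[OF assms] by simp
  also have "\<dots> < \<infinity>" by simp
  finally show ?thesis .
qed

lemma symA_fin:
  fixes al r a :: real assumes "0 \<le> al" "al < 1" "0 \<le> r"
  shows "(\<integral>\<^sup>+x. ennreal (\<bar>x - a\<bar> powr (-al)) * indicator {x. \<bar>x - a\<bar> \<le> r} x \<partial>lborel) < \<infinity>"
proof -
  let ?g = "\<lambda>x::real. ennreal (\<bar>x\<bar> powr (-al)) * indicator {x. \<bar>x\<bar> \<le> r} x"
  have m[measurable]: "?g \<in> borel_measurable borel" by measurable
  have "(\<integral>\<^sup>+x. ennreal (\<bar>x - a\<bar> powr (-al)) * indicator {x. \<bar>x - a\<bar> \<le> r} x \<partial>lborel)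
     = (\<integral>\<^sup>+x. ?g (x + (-a)) \<partial>lborel)" by (intro nn_integral_cong) (simp split: split_indicator)
  also have "\<dots> = (\<integral>\<^sup>+x. ?g x \<partial>lborel)" by (rule nn_translate[OF m])
  finally show ?thesis using sym0_fin[OF assms] by simp
qed

definition D34 :: "real \<Rightarrow> real" where "D34 x = 1 / (sqrt x * sqrt (sqrt x))"

lemma inv_sqrt_powr: "1 / sqrt \<bar>x\<bar> = \<bar>x\<bar> powr (-1/2)"
proof -
  have "\<bar>x\<bar> powr (-1/2) = \<bar>x\<bar> powr (- (1/2))" by simp
  also have "\<dots> = inverse (\<bar>x\<bar> powr (1/2))" by (rule powr_minus)
  also have "\<dots> = inverse (sqrt \<bar>x\<bar>)" by (simp only: powr_half_sqrt[OF abs_ge_zero])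
  finally show ?thesis by (metis inverse_eq_divide)
qed

lemma D34_powr: "D34 \<bar>x\<bar> = \<bar>x\<bar> powr (-3/4)"
proof -
  have e1: "\<bar>x\<bar> powr (3/4) = \<bar>x\<bar> powr (1/2 + (1/2) * (1/2))" by simp
  have e2: "\<bar>x\<bar> powr (1/2 + (1/2) * (1/2)) = \<bar>x\<bar> powr (1/2) * (\<bar>x\<bar> powr (1/2)) powr (1/2)"
    by (simp only: powr_add powr_powr)
  have e3: "\<bar>x\<bar> powr (1/2) * (\<bar>x\<bar> powr (1/2)) powr (1/2) = sqrt \<bar>x\<bar> * sqrt (sqrt \<bar>x\<bar>)"
    by (simp only: powr_half_sqrt[OF abs_ge_zero] powr_half_sqrt[OF real_sqrt_ge_zero[OF abs_ge_zero]])
  have e4: "\<bar>x\<bar> powr (-3/4) = \<bar>x\<bar> powr (- (3/4))" by simp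
  have e5: "\<bar>x\<bar> powr (- (3/4)) = inverse (\<bar>x\<bar> powr (3/4))" by (rule powr_minus)
  show ?thesis unfolding D34_def e4 e5 e1 e2 e3 by (metis inverse_eq_divide)
qed

lemma inv32_powr: "1 / (\<bar>x\<bar> * sqrt \<bar>x\<bar>) = \<bar>x\<bar> powr (-3/2)"
proof (cases "x = 0")
  case False
  have e1: "\<bar>x\<bar> powr (3/2) = \<bar>x\<bar> powr (1 + 1/2)" by simp
  have e2: "\<bar>x\<bar> powr (1 + 1/2) = \<bar>x\<bar> powr 1 * \<bar>x\<bar> powr (1/2)" by (rule powr_add)
  have e3: "\<bar>x\<bar> powr 1 * \<bar>x\<bar> powr (1/2) = \<bar>x\<bar> * sqrt \<bar>x\<bar>"
    using False by (simp only: powr_half_sqrt[OF abs_ge_zero] powr_one_gt_zero_iff zero_less_abs_iff powr_one)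
  have e4: "\<bar>x\<bar> powr (-3/2) = \<bar>x\<bar> powr (- (3/2))" by simp
  have e5: "\<bar>x\<bar> powr (- (3/2)) = inverse (\<bar>x\<bar> powr (3/2))" by (rule powr_minus)
  show ?thesis unfolding e4 e5 e1 e2 e3 by (metis inverse_eq_divide)
qed simp

lemma symA_half_fin:
  assumes "0 \<le> r"
  shows "(\<integral>\<^sup>+x. ennreal (1 / sqrt \<bar>x - a\<bar>) * indicator {x. \<bar>x - a\<bar> \<le> r} x \<partial>lborel) < \<infinity>"
  using symA_fin[of "1/2" r a] assms by (simp add: inv_sqrt_powr)

lemma symA_34_fin:
  assumes "0 \<le> r"
  shows "(\<integral>\<^sup>+x. ennreal (D34 \<bar>x - a\<bar>) * indicator {x. \<bar>x - a\<bar> \<le> r} x \<partial>lborel) < \<infinity>"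
  using symA_fin[of "3/4" r a] assms by (simp add: D34_powr)

lemma tail32_fin:
  assumes "0 < r"
  shows "(\<integral>\<^sup>+x. ennreal (1 / (\<bar>x\<bar> * sqrt \<bar>x\<bar>)) * indicator {x. r \<le> \<bar>x\<bar>} x \<partial>lborel) < \<infinity>"
  using tail_fin[of "3/2" r] assms by (simp add: inv32_powr)

definition K0 :: ennreal where
  "K0 = (\<integral>\<^sup>+x. ennreal (1 / (sqrt (x^2+1) * sqrt (sqrt (x^2+1)))) \<partial>lborel)"

lemma K0_fin: "K0 < \<infinity>"
proof -
  have "K0 \<le> (\<integral>\<^sup>+x. ennreal 1 * indicator {x::real. \<bar>x\<bar> \<le> 1} x + ennreal (1 / (\<bar>x\<bar> * sqrt \<bar>x\<bar>)) * indicator {x. 1 \<le> \<bar>x\<bar>} x \<partial>lborel)"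
    unfolding K0_def
  proof (intro nn_integral_mono)
    fix x :: real
    show "ennreal (1 / (sqrt (x^2+1) * sqrt (sqrt (x^2+1))))
        \<le> ennreal 1 * indicator {x::real. \<bar>x\<bar> \<le> 1} x + ennreal (1 / (\<bar>x\<bar> * sqrt \<bar>x\<bar>)) * indicator {x. 1 \<le> \<bar>x\<bar>} x"
    proof (cases "\<bar>x\<bar> \<le> 1")
      case True
      have "1 \<le> sqrt (x^2+1)" by simp
      moreover have "1 \<le> sqrt (sqrt (x^2+1))" by simp
      ultimately have "1 \<le> sqrt (x^2+1) * sqrt (sqrt (x^2+1))"
        by (metis mult_mono' mult_1 zero_le_one)
      then have "1 / (sqrt (x^2+1) * sqrt (sqrt (x^2+1))) \<le> 1" by simp
      then have "ennreal (1 / (sqrt (x^2+1) * sqrt (sqrt (x^2+1)))) \<le> indicator {x. \<bar>x\<bar> \<le> 1} x"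
        using True by (simp add: indicator_def ennreal_leI)
      then show ?thesis by (metis add_increasing2 mult_1 ennreal_1 zero_le)
    next
      case False
      have a: "\<bar>x\<bar> \<le> sqrt (x^2+1)"
        by (metis abs_ge_zero add.commute le_add_same_cancel2 real_le_rsqrt zero_le_one power2_abs)
      then have b: "sqrt \<bar>x\<bar> \<le> sqrt (sqrt (x^2+1))" by simp
      have pos: "0 < \<bar>x\<bar> * sqrt \<bar>x\<bar>" using False by simp
      have "\<bar>x\<bar> * sqrt \<bar>x\<bar> \<le> sqrt (x^2+1) * sqrt (sqrt (x^2+1))"
        using a b by (intro mult_mono) auto
      then have "1 / (sqrt (x^2+1) * sqrt (sqrt (x^2+1))) \<le> 1 / (\<bar>x\<bar> * sqrt \<bar>x\<bar>)"
        using pos by (intro divide_left_mono) auto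
      then show ?thesis using False by (simp add: indicator_def ennreal_leI)
    qed
  qed
  also have "\<dots> = (\<integral>\<^sup>+x. ennreal 1 * indicator {x::real. \<bar>x\<bar> \<le> 1} x \<partial>lborel) + (\<integral>\<^sup>+x. ennreal (1 / (\<bar>x\<bar> * sqrt \<bar>x\<bar>)) * indicator {x. 1 \<le> \<bar>x\<bar>} x \<partial>lborel)"
    by (rule nn_integral_add) measurable
  also have "\<dots> < \<infinity>"
  proof -
    have "{x::real. \<bar>x\<bar> \<le> 1} = {-1..1}" by auto
    then have "(\<integral>\<^sup>+x. indicator {x::real. \<bar>x\<bar> \<le> 1} x \<partial>lborel) = 2" by simp
    then show ?thesis using tail32_fin[of 1] by simp
  qed
  finally show ?thesis .
qed

lemma scale_K0:
  assumes u: "0 < u"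
  shows "(\<integral>\<^sup>+t. ennreal (1 / (sqrt (t^2+u) * sqrt (sqrt (t^2+u)))) \<partial>lborel) = ennreal (1 / sqrt (sqrt u)) * K0"
proof -
  let ?g = "\<lambda>t::real. ennreal (1 / (sqrt (t^2+u) * sqrt (sqrt (t^2+u))))"
  have m: "?g \<in> borel_measurable borel" by measurable
  have su: "sqrt u \<noteq> 0" using u by simp
  have eq: "?g (0 + sqrt u * x) = ennreal (1 / (sqrt u * sqrt (sqrt u))) * ennreal (1 / (sqrt (x^2+1) * sqrt (sqrt (x^2+1))))" for x
  proof -
    have "(0 + sqrt u * x)^2 + u = u * (x^2+1)" using u by (simp add: power_mult_distrib algebra_simps)
    then have s1: "sqrt ((0 + sqrt u * x)^2 + u) = sqrt u * sqrt (x^2+1)" by (simp add: real_sqrt_mult)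
    have s2: "sqrt (sqrt u * sqrt (x^2+1)) = sqrt (sqrt u) * sqrt (sqrt (x^2+1))"
      by (simp add: real_sqrt_mult)
    have e: "1 / (sqrt u * sqrt (x^2+1) * (sqrt (sqrt u) * sqrt (sqrt (x^2+1))))
       = (1/(sqrt u * sqrt (sqrt u))) * (1 / (sqrt (x^2+1) * sqrt (sqrt (x^2+1))))" by simp
    show ?thesis unfolding s2 s1 e by (rule ennreal_mult) (use u in auto)
  qed
  have "(\<integral>\<^sup>+t. ?g t \<partial>lborel) = ennreal \<bar>sqrt u\<bar> * (\<integral>\<^sup>+x. ?g (0 + sqrt u * x) \<partial>lborel)"
    by (rule nn_integral_real_affine[OF m su])
  also have "\<dots> = ennreal (sqrt u) * (ennreal (1 / (sqrt u * sqrt (sqrt u))) * K0)"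
    unfolding eq K0_def using u by (subst nn_integral_cmult) (auto)
  also have "\<dots> = (ennreal (sqrt u) * ennreal (1 / (sqrt u * sqrt (sqrt u)))) * K0"
    by (simp only: mult.assoc)
  also have "ennreal (sqrt u) * ennreal (1 / (sqrt u * sqrt (sqrt u))) = ennreal (1 / sqrt (sqrt u))"
  proof -
    have "sqrt u * (1 / (sqrt u * sqrt (sqrt u))) = 1 / sqrt (sqrt u)" using u by simp
    then show ?thesis by (metis ennreal_mult' real_sqrt_ge_zero less_imp_le u)
  qed
  finally show ?thesis .
qed

definition Qf :: "real \<Rightarrow> real \<Rightarrow> real" where
  "Qf t w = (if 1 < t^2 + w^2 then
     (1 / sqrt \<bar>sqrt (t^2+w^2-1) - t\<bar> + 1 / sqrt \<bar>sqrt (t^2+w^2-1) + t\<bar>)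
       / (2 * sqrt (t^2+w^2-1) * sqrt (t^2+w^2)) else 0)"

lemma Qf_nonneg: "0 \<le> Qf t w"
  unfolding Qf_def by auto

lemma alg1: "0 < h \<Longrightarrow> 0 < p \<Longrightarrow> 0 < d \<Longrightarrow> (2 * (s * p / d)) / (2 * h * (p*p)) = s / (h * p * d)"
  for h p d s :: real by (simp add: field_simps)

lemma core1:
  fixes t w :: real
  assumes S: "1 < t^2 + w^2" and w: "w^2 \<noteq> 1"
  shows "Qf t w \<le> sqrt 2 / (sqrt (t^2+w^2-1) * sqrt (sqrt (t^2+w^2)) * sqrt \<bar>w^2 - 1\<bar>)"
proof -
  define h where "h = sqrt (t^2+w^2-1)"
  define P where "P = sqrt (t^2+w^2)"
  define D where "D = \<bar>w^2 - 1\<bar>"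
  have hpos: "0 < h" using S by (simp add: h_def)
  have Ppos: "0 < P" using S by (simp add: P_def)
  have Dpos: "0 < D" using w by (simp add: D_def)
  have hh: "h^2 = t^2 + w^2 - 1" using S by (simp add: h_def)
  have "(h - t) * (h + t) = h^2 - t^2" by (simp add: power2_eq_square algebra_simps)
  also have "\<dots> = w^2 - 1" using hh by simp
  finally have AB: "\<bar>h - t\<bar> * \<bar>h + t\<bar> = D" by (simp add: D_def abs_mult[symmetric])
  have tP: "\<bar>t\<bar> \<le> P" unfolding P_def
    by (metis real_sqrt_abs real_sqrt_le_mono le_add_same_cancel1 zero_le_power2)
  have hP: "h \<le> P" unfolding h_def P_def by simp
  have A2: "\<bar>h - t\<bar> \<le> 2 * P" using tP hP hpos by linarith
  have B2: "\<bar>h + t\<bar> \<le> 2 * P" using tP hP hpos by linarith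
  have Apos: "0 < \<bar>h - t\<bar>" using AB Dpos by (metis abs_ge_zero less_eq_real_def mult_eq_0_iff)
  have Bpos: "0 < \<bar>h + t\<bar>" using AB Dpos by (metis abs_ge_zero less_eq_real_def mult_eq_0_iff)
  have sAB: "sqrt \<bar>h - t\<bar> * sqrt \<bar>h + t\<bar> = sqrt D" using AB by (metis real_sqrt_mult)
  have sP: "sqrt (2 * P) = sqrt 2 * sqrt P" by (simp add: real_sqrt_mult)
  have iA: "1 / sqrt \<bar>h - t\<bar> \<le> sqrt 2 * sqrt P / sqrt D"
  proof -
    have "1 / sqrt \<bar>h - t\<bar> = sqrt \<bar>h + t\<bar> / sqrt D"
      using sAB Apos Bpos by (auto simp: field_simps)
    also have "\<dots> \<le> sqrt (2 * P) / sqrt D"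
      using B2 Dpos by (intro divide_right_mono) auto
    finally show ?thesis using sP by simp
  qed
  have iB: "1 / sqrt \<bar>h + t\<bar> \<le> sqrt 2 * sqrt P / sqrt D"
  proof -
    have "1 / sqrt \<bar>h + t\<bar> = sqrt \<bar>h - t\<bar> / sqrt D"
      using sAB Apos Bpos by (auto simp: field_simps)
    also have "\<dots> \<le> sqrt (2 * P) / sqrt D"
      using A2 Dpos by (intro divide_right_mono) auto
    finally show ?thesis using sP by simp
  qed
  have "Qf t w = (1 / sqrt \<bar>h - t\<bar> + 1 / sqrt \<bar>h + t\<bar>) / (2 * h * P)"
    using S by (simp add: Qf_def h_def P_def)
  also have "\<dots> \<le> (2 * (sqrt 2 * sqrt P / sqrt D)) / (2 * h * P)"
    using iA iB hpos Ppos by (intro divide_right_mono) auto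
  also have "\<dots> = sqrt 2 / (h * sqrt P * sqrt D)"
  proof -
    have e: "2 * h * P = 2 * h * (sqrt P * sqrt P)" using Ppos by simp
    show ?thesis unfolding e by (rule alg1) (use hpos Ppos Dpos in auto)
  qed
  finally show ?thesis unfolding h_def P_def D_def .
qed

lemma reg1:
  fixes t w :: real
  assumes w: "1 < w^2"
  shows "Qf t w \<le> (sqrt 2 / sqrt (w^2-1)) * (1 / (sqrt (t^2+(w^2-1)) * sqrt (sqrt (t^2+(w^2-1)))))"
proof -
  have S: "1 < t^2 + w^2" using w zero_le_power2[of t] by linarith
  have w1: "w^2 \<noteq> 1" using w by simp
  define h where "h = sqrt (t^2+(w^2-1))"
  define P where "P = sqrt (t^2+w^2)"
  define su where "su = sqrt (w^2-1)"
  have hpos: "0 < h" using S by (simp add: h_def)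
  have supos: "0 < su" using w by (simp add: su_def)
  have hP: "h \<le> P" unfolding h_def P_def by simp
  have shP: "sqrt h \<le> sqrt P" using hP by simp
  have e1: "sqrt (t^2+w^2-1) = h" unfolding h_def by (simp add: algebra_simps)
  have e2: "sqrt \<bar>w^2 - 1\<bar> = su" using w unfolding su_def by simp
  have "Qf t w \<le> sqrt 2 / (h * sqrt P * su)"
    using core1[OF S w1] unfolding e1 e2 P_def .
  also have "\<dots> \<le> sqrt 2 / (h * sqrt h * su)"
  proof (rule divide_left_mono)
    show "h * sqrt h * su \<le> h * sqrt P * su"
      using shP hpos supos by (intro mult_right_mono mult_left_mono) auto
    show "0 < h * sqrt P * su * (h * sqrt h * su)"
      using hpos supos hP by (intro mult_pos_pos) auto
  qed simp
  also have "\<dots> = (sqrt 2 / su) * (1 / (h * sqrt h))" by simp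
  finally show ?thesis unfolding h_def su_def .
qed

lemma reg2:
  fixes t w :: real
  assumes w: "w^2 < 1" and t: "2 \<le> \<bar>t\<bar>"
  shows "Qf t w \<le> (2 / sqrt (1 - w^2)) * (1 / (\<bar>t\<bar> * sqrt \<bar>t\<bar>))"
proof -
  have "2 * 2 \<le> \<bar>t\<bar> * \<bar>t\<bar>" using t by (intro mult_mono) auto
  then have t2: "4 \<le> t^2" by (simp add: power2_eq_square)
  have S: "1 < t^2 + w^2" using t2 zero_le_power2[of w] by linarith
  have w1: "w^2 \<noteq> 1" using w by simp
  define h where "h = sqrt (t^2+w^2-1)"
  define P where "P = sqrt (t^2+w^2)"
  define sv where "sv = sqrt (1 - w^2)"
  have hpos: "0 < h" using S by (simp add: h_def)
  have svpos: "0 < sv" using w by (simp add: sv_def)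
  have tpos: "0 < \<bar>t\<bar>" using t by simp
  have tP: "\<bar>t\<bar> \<le> P" unfolding P_def
    by (metis real_sqrt_abs real_sqrt_le_mono le_add_same_cancel1 zero_le_power2)
  have stP: "sqrt \<bar>t\<bar> \<le> sqrt P" using tP by simp
  have th: "\<bar>t\<bar> \<le> sqrt 2 * h"
  proof -
    have w0: "0 \<le> w^2" by simp
    have "2*(t^2+w^2-1) = t^2 + (t^2 - 2) + 2*w^2" by (simp add: algebra_simps)
    then have "t^2 \<le> 2 * (t^2+w^2-1)" using t2 w0 by linarith
    then have "sqrt (t^2) \<le> sqrt (2 * (t^2+w^2-1))" by (rule real_sqrt_le_mono)
    then show ?thesis unfolding h_def by (simp only: real_sqrt_mult real_sqrt_abs)
  qed
  have e2: "sqrt \<bar>w^2 - 1\<bar> = sv" using w unfolding sv_def by (simp add: abs_if)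
  have "Qf t w \<le> sqrt 2 / (h * sqrt P * sv)"
    using core1[OF S w1] unfolding e2 h_def P_def .
  also have "\<dots> = 2 / (sqrt 2 * h * sqrt P * sv)"
  proof -
    have "(2::real) / (sqrt 2 * (h * sqrt P * sv)) = (sqrt 2 * sqrt 2) / (sqrt 2 * (h * sqrt P * sv))" by simp
    also have "\<dots> = sqrt 2 / (h * sqrt P * sv)" by (rule mult_divide_mult_cancel_left) simp
    finally show ?thesis by (simp add: mult.assoc)
  qed
  also have "\<dots> \<le> 2 / (\<bar>t\<bar> * sqrt \<bar>t\<bar> * sv)"
  proof (rule divide_left_mono)
    show "\<bar>t\<bar> * sqrt \<bar>t\<bar> * sv \<le> sqrt 2 * h * sqrt P * sv"
    proof -
      have "\<bar>t\<bar> * sqrt \<bar>t\<bar> \<le> (sqrt 2 * h) * sqrt P"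
        using th stP tpos by (intro mult_mono) auto
      then show ?thesis using svpos by (simp add: mult_right_mono)
    qed
    show "0 < sqrt 2 * h * sqrt P * sv * (\<bar>t\<bar> * sqrt \<bar>t\<bar> * sv)"
      using hpos svpos tpos tP by (intro mult_pos_pos) auto
  qed simp
  also have "\<dots> = (2 / sv) * (1 / (\<bar>t\<bar> * sqrt \<bar>t\<bar>))" by simp
  finally show ?thesis unfolding sv_def .
qed

lemma reg3:
  fixes t w :: real
  assumes w: "w^2 < 1" and t: "\<bar>t\<bar> < 2" and S: "1 < t^2 + w^2"
  shows "Qf t w \<le> D34 (1 - w^2) * (1 / sqrt \<bar>t - sqrt (1 - w^2)\<bar> + 1 / sqrt \<bar>t + sqrt (1 - w^2)\<bar>)"
proof -
  have w1: "w^2 \<noteq> 1" using w by simp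
  define v where "v = 1 - w^2"
  define h where "h = sqrt (t^2+w^2-1)"
  define P where "P = sqrt (t^2+w^2)"
  define sv where "sv = sqrt v"
  have vpos: "0 < v" using w by (simp add: v_def)
  have svpos: "0 < sv" using vpos by (simp add: sv_def)
  have hpos: "0 < h" using S by (simp add: h_def)
  have P1: "1 \<le> sqrt P" using S unfolding P_def by simp
  have svv: "sv * sv = v" using vpos by (simp add: sv_def)
  have tv: "v < t^2" using S by (simp add: v_def)
  have tsv: "sv < \<bar>t\<bar>"
  proof -
    have "sqrt v < sqrt (t^2)" using tv by (rule real_sqrt_less_mono)
    then show ?thesis by (simp add: sv_def)
  qed
  have hh: "h * h = (\<bar>t\<bar> - sv) * (\<bar>t\<bar> + sv)"
  proof -
    have "h * h = t^2 + w^2 - 1" using S by (simp add: h_def)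
    also have "\<dots> = \<bar>t\<bar> * \<bar>t\<bar> - sv * sv" using svv by (simp add: v_def power2_eq_square)
    finally show ?thesis by (simp add: algebra_simps)
  qed
  have hge: "sqrt (\<bar>t\<bar> - sv) * sqrt (2 * sv) \<le> h"
  proof -
    have "(\<bar>t\<bar> - sv) * (2 * sv) \<le> h * h" unfolding hh
      using tsv svpos by (intro mult_left_mono) auto
    then have "sqrt ((\<bar>t\<bar> - sv) * (2 * sv)) \<le> sqrt (h * h)" by (rule real_sqrt_le_mono)
    then show ?thesis using hpos by (simp add: real_sqrt_mult)
  qed
  have e2: "sqrt \<bar>w^2 - 1\<bar> = sv" using w unfolding sv_def v_def by (simp add: abs_if)
  have pos1: "0 < sqrt (\<bar>t\<bar> - sv) * sqrt (2 * sv) * 1 * sv"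
    using tsv svpos by simp
  have "Qf t w \<le> sqrt 2 / (h * sqrt P * sv)"
    using core1[OF S w1] unfolding e2 h_def P_def .
  also have "\<dots> \<le> sqrt 2 / (sqrt (\<bar>t\<bar> - sv) * sqrt (2 * sv) * 1 * sv)"
  proof (rule divide_left_mono)
    show "sqrt (\<bar>t\<bar> - sv) * sqrt (2 * sv) * 1 * sv \<le> h * sqrt P * sv"
      using hge P1 svpos hpos by (intro mult_right_mono mult_mono) auto
    show "0 < h * sqrt P * sv * (sqrt (\<bar>t\<bar> - sv) * sqrt (2 * sv) * 1 * sv)"
      using hpos svpos P1 pos1 tsv by (intro mult_pos_pos) auto
  qed simp
  also have "\<dots> = D34 v * (1 / sqrt (\<bar>t\<bar> - sv))"
  proof -
    have "sqrt (2 * sv) = sqrt 2 * sqrt sv" by (simp add: real_sqrt_mult)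
    then show ?thesis unfolding D34_def sv_def[symmetric] using svpos tsv by (simp add: field_simps)
  qed
  also have "\<dots> \<le> D34 v * (1 / sqrt \<bar>t - sv\<bar> + 1 / sqrt \<bar>t + sv\<bar>)"
  proof (rule mult_left_mono)
    show "0 \<le> D34 v" unfolding D34_def using vpos by simp
    show "1 / sqrt (\<bar>t\<bar> - sv) \<le> 1 / sqrt \<bar>t - sv\<bar> + 1 / sqrt \<bar>t + sv\<bar>"
    proof (cases "0 \<le> t")
      case True
      then have "\<bar>t\<bar> - sv = \<bar>t - sv\<bar>" using tsv by simp
      then show ?thesis by simp
    next
      case False
      then have "\<bar>t\<bar> - sv = \<bar>t + sv\<bar>" using tsv by simp
      then show ?thesis by simp
    qed
  qed
  finally show ?thesis unfolding sv_def v_def .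
qed

definition A2c :: ennreal where
  "A2c = (\<integral>\<^sup>+t. ennreal (1 / (\<bar>t\<bar> * sqrt \<bar>t\<bar>)) * indicator {t::real. 2 \<le> \<bar>t\<bar>} t \<partial>lborel)"

definition K1 :: ennreal where
  "K1 = (\<integral>\<^sup>+x. ennreal (1 / sqrt \<bar>x\<bar>) * indicator {x::real. \<bar>x\<bar> \<le> 3} x \<partial>lborel)"

definition Kin :: ennreal where
  "Kin = ennreal (sqrt 2) * K0 + 2 * A2c + 2 * K1"

lemma Kin_fin: "Kin < \<infinity>"
proof -
  have "A2c < \<infinity>" unfolding A2c_def using tail32_fin[of 2] by simp
  moreover have "K1 < \<infinity>" unfolding K1_def using symA_half_fin[of 3 0] by simp
  ultimately show ?thesis unfolding Kin_def using K0_fin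
    by (simp add: ennreal_mult_less_top)
qed

lemma K1_transl: "(\<integral>\<^sup>+t. ennreal (1 / sqrt \<bar>t - a\<bar>) * indicator {x::real. \<bar>x - a\<bar> \<le> 3} t \<partial>lborel) = K1"
proof -
  let ?g = "\<lambda>x::real. ennreal (1 / sqrt \<bar>x\<bar>) * indicator {x::real. \<bar>x\<bar> \<le> 3} x"
  have m: "?g \<in> borel_measurable borel" by measurable
  have "(\<integral>\<^sup>+t. ennreal (1 / sqrt \<bar>t - a\<bar>) * indicator {x::real. \<bar>x - a\<bar> \<le> 3} t \<partial>lborel)
      = (\<integral>\<^sup>+t. ?g (t + (-a)) \<partial>lborel)"
    by (intro nn_integral_cong) (simp split: split_indicator)
  also have "\<dots> = K1" unfolding K1_def by (rule nn_translate[OF m])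
  finally show ?thesis .
qed

lemma inner_big:
  fixes w :: real assumes w: "1 < w^2"
  shows "(\<integral>\<^sup>+t. ennreal (Qf t w) \<partial>lborel) \<le> ennreal (D34 \<bar>w^2 - 1\<bar>) * Kin"
proof -
  define u where "u = w^2 - 1"
  have u: "0 < u" using w by (simp add: u_def)
  have "(\<integral>\<^sup>+t. ennreal (Qf t w) \<partial>lborel)
     \<le> (\<integral>\<^sup>+t. ennreal (sqrt 2 / sqrt u) * ennreal (1 / (sqrt (t^2+u) * sqrt (sqrt (t^2+u)))) \<partial>lborel)"
  proof (intro nn_integral_mono)
    fix t :: real
    have "Qf t w \<le> (sqrt 2 / sqrt u) * (1 / (sqrt (t^2+u) * sqrt (sqrt (t^2+u))))"
      using reg1[OF w, of t] unfolding u_def .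
    then show "ennreal (Qf t w) \<le> ennreal (sqrt 2 / sqrt u) * ennreal (1 / (sqrt (t^2+u) * sqrt (sqrt (t^2+u))))"
      by (subst ennreal_mult'[symmetric]) (use u in \<open>auto intro: ennreal_leI\<close>)
  qed
  also have "\<dots> = ennreal (sqrt 2 / sqrt u) * (ennreal (1 / sqrt (sqrt u)) * K0)"
    by (subst nn_integral_cmult) (auto simp: scale_K0[OF u])
  also have "\<dots> = ennreal (D34 u) * (ennreal (sqrt 2) * K0)"
  proof -
    have eq: "sqrt 2 / sqrt u * (1 / sqrt (sqrt u)) = D34 u * sqrt 2" unfolding D34_def by simp
    have a0: "0 \<le> sqrt 2 / sqrt u" using u by simp
    have "ennreal (sqrt 2 / sqrt u) * ennreal (1 / sqrt (sqrt u)) = ennreal (sqrt 2 / sqrt u * (1 / sqrt (sqrt u)))"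
      by (rule ennreal_mult'[symmetric, OF a0])
    also have "\<dots> = ennreal (D34 u * sqrt 2)" using eq by simp
    also have "\<dots> = ennreal (D34 u) * ennreal (sqrt 2)" by (rule ennreal_mult'') simp
    finally show ?thesis by (metis mult.assoc)
  qed
  also have "\<dots> \<le> ennreal (D34 u) * Kin"
    unfolding Kin_def by (intro mult_left_mono) (auto simp: add.assoc)
  finally show ?thesis using u by (simp add: u_def)
qed

lemma inner_small:
  fixes w :: real assumes w: "w^2 < 1"
  shows "(\<integral>\<^sup>+t. ennreal (Qf t w) \<partial>lborel) \<le> ennreal (D34 \<bar>w^2 - 1\<bar>) * Kin"
proof -
  define v where "v = 1 - w^2"
  define sv where "sv = sqrt v"
  have v: "0 < v" "v \<le> 1" using w by (auto simp: v_def)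
  have sv: "0 < sv" "sv \<le> 1" using v by (auto simp: sv_def)
  have D0: "0 \<le> D34 v" unfolding D34_def using v by simp
  define F1 where "F1 = (\<lambda>t::real. ennreal (1 / (\<bar>t\<bar> * sqrt \<bar>t\<bar>)) * indicator {t::real. 2 \<le> \<bar>t\<bar>} t)"
  define F2 where "F2 = (\<lambda>t::real. ennreal (1 / sqrt \<bar>t - sv\<bar>) * indicator {x::real. \<bar>x - sv\<bar> \<le> 3} t)"
  define F3 where "F3 = (\<lambda>t::real. ennreal (1 / sqrt \<bar>t - (-sv)\<bar>) * indicator {x::real. \<bar>x - (-sv)\<bar> \<le> 3} t)"
  have m1[measurable]: "F1 \<in> borel_measurable lborel" unfolding F1_def by measurable
  have m2[measurable]: "F2 \<in> borel_measurable lborel" unfolding F2_def by measurable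
  have m3[measurable]: "F3 \<in> borel_measurable lborel" unfolding F3_def by measurable
  have pt: "ennreal (Qf t w) \<le> ennreal (2 / sqrt v) * F1 t + ennreal (D34 v) * (F2 t + F3 t)" for t
  proof (cases "1 < t^2 + w^2")
    case False
    then show ?thesis by (simp add: Qf_def)
  next
    case S: True
    show ?thesis
    proof (cases "2 \<le> \<bar>t\<bar>")
      case True
      have "Qf t w \<le> (2 / sqrt v) * (1 / (\<bar>t\<bar> * sqrt \<bar>t\<bar>))"
        using reg2[OF w True] unfolding v_def .
      then have "ennreal (Qf t w) \<le> ennreal (2 / sqrt v) * ennreal (1 / (\<bar>t\<bar> * sqrt \<bar>t\<bar>))"
        by (subst ennreal_mult'[symmetric]) (use v in \<open>auto intro: ennreal_leI\<close>)
      also have "\<dots> = ennreal (2 / sqrt v) * F1 t" using True by (simp add: F1_def)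
      also have "\<dots> \<le> ennreal (2 / sqrt v) * F1 t + ennreal (D34 v) * (F2 t + F3 t)"
        by (rule add_increasing2) auto
      finally show ?thesis .
    next
      case False
      then have t2: "\<bar>t\<bar> < 2" by simp
      have "Qf t w \<le> D34 v * (1 / sqrt \<bar>t - sv\<bar> + 1 / sqrt \<bar>t + sv\<bar>)"
        using reg3[OF w t2 S] unfolding v_def sv_def .
      then have "ennreal (Qf t w) \<le> ennreal (D34 v * (1 / sqrt \<bar>t - sv\<bar> + 1 / sqrt \<bar>t + sv\<bar>))"
        by (rule ennreal_leI)
      also have "\<dots> = ennreal (D34 v) * (ennreal (1 / sqrt \<bar>t - sv\<bar>) + ennreal (1 / sqrt \<bar>t + sv\<bar>))"
        using D0 by (simp add: ennreal_mult' ennreal_plus)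
      also have "\<dots> = ennreal (D34 v) * (F2 t + F3 t)"
      proof -
        have "\<bar>t - sv\<bar> \<le> 3" "\<bar>t - (-sv)\<bar> \<le> 3" using t2 sv by auto
        then show ?thesis by (simp add: F2_def F3_def)
      qed
      also have "\<dots> \<le> ennreal (2 / sqrt v) * F1 t + ennreal (D34 v) * (F2 t + F3 t)"
        by (rule add_increasing) auto
      finally show ?thesis .
    qed
  qed
  have "(\<integral>\<^sup>+t. ennreal (Qf t w) \<partial>lborel)
      \<le> (\<integral>\<^sup>+t. ennreal (2 / sqrt v) * F1 t + ennreal (D34 v) * (F2 t + F3 t) \<partial>lborel)"
    by (intro nn_integral_mono pt)
  also have "\<dots> = ennreal (2 / sqrt v) * (\<integral>\<^sup>+t. F1 t \<partial>lborel) + ennreal (D34 v) * ((\<integral>\<^sup>+t. F2 t \<partial>lborel) + (\<integral>\<^sup>+t. F3 t \<partial>lborel))"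
    by (simp add: nn_integral_add nn_integral_cmult)
  also have "\<dots> = ennreal (2 / sqrt v) * A2c + ennreal (D34 v) * (K1 + K1)"
    unfolding F1_def F2_def F3_def A2c_def K1_transl by simp
  also have "\<dots> \<le> ennreal (D34 v) * (2 * A2c) + ennreal (D34 v) * (K1 + K1)"
  proof -
    have "sqrt (sqrt v) \<le> 1" using v by simp
    then have "2 / sqrt v \<le> D34 v * 2" unfolding D34_def using sv
      by (simp add: sv_def field_simps mult_le_cancel_left1)
    then have "ennreal (2 / sqrt v) \<le> ennreal (D34 v) * 2"
      using D0 by (metis ennreal_leI ennreal_mult'' ennreal_numeral zero_le_numeral)
    then have "ennreal (2 / sqrt v) * A2c \<le> ennreal (D34 v) * 2 * A2c" by (rule mult_right_mono) simp
    then show ?thesis by (simp add: mult.assoc)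
  qed
  also have "\<dots> = ennreal (D34 v) * (2 * A2c + 2 * K1)"
    by (simp add: distrib_left mult_2)
  also have "\<dots> \<le> ennreal (D34 v) * Kin"
    unfolding Kin_def by (intro mult_left_mono) (auto simp: add.assoc)
  finally show ?thesis using v by (simp add: v_def abs_if)
qed

lemma D34_anti: "0 < a \<Longrightarrow> a \<le> b \<Longrightarrow> D34 b \<le> D34 a"
  unfolding D34_def
  by (intro divide_left_mono mult_mono) (auto intro: mult_pos_pos)

lemma D34_16: "w \<noteq> 0 \<Longrightarrow> D34 (w^2/16) = 8 * (1 / (\<bar>w\<bar> * sqrt \<bar>w\<bar>))"
proof -
  assume "w \<noteq> 0"
  have a: "sqrt (w^2/16) = \<bar>w\<bar> / 4" by (simp add: real_sqrt_divide)
  have b: "sqrt (\<bar>w\<bar> / 4) = sqrt \<bar>w\<bar> / 2" by (simp add: real_sqrt_divide)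
  show ?thesis unfolding D34_def a b using \<open>w \<noteq> 0\<close> by simp
qed

lemma outer_fin: "(\<integral>\<^sup>+w. ennreal (D34 \<bar>w^2 - 1\<bar>) \<partial>lborel) < \<infinity>"
proof -
  define G1 where "G1 = (\<lambda>w::real. ennreal (D34 \<bar>w - 1\<bar>) * indicator {x::real. \<bar>x - 1\<bar> \<le> 3} w)"
  define G2 where "G2 = (\<lambda>w::real. ennreal (D34 \<bar>w - (-1)\<bar>) * indicator {x::real. \<bar>x - (-1)\<bar> \<le> 3} w)"
  define G3 where "G3 = (\<lambda>w::real. ennreal (1 / (\<bar>w\<bar> * sqrt \<bar>w\<bar>)) * indicator {x::real. 2 \<le> \<bar>x\<bar>} w)"
  have m1[measurable]: "G1 \<in> borel_measurable lborel" unfolding G1_def D34_def by measurable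
  have m2[measurable]: "G2 \<in> borel_measurable lborel" unfolding G2_def D34_def by measurable
  have m3[measurable]: "G3 \<in> borel_measurable lborel" unfolding G3_def by measurable
  have pt: "ennreal (D34 \<bar>w^2 - 1\<bar>) \<le> G1 w + G2 w + 8 * G3 w" for w :: real
  proof (cases "w^2 = 1")
    case True
    then show ?thesis by (simp add: D34_def)
  next
    case w1: False
    show ?thesis
    proof (cases "2 \<le> \<bar>w\<bar>")
      case True
      have "2 * 2 \<le> \<bar>w\<bar> * \<bar>w\<bar>" using True by (intro mult_mono) auto
      then have w4: "4 \<le> w^2" by (simp add: power2_eq_square)
      have "0 < w^2/16" using True by simp
      moreover have "w^2/16 \<le> \<bar>w^2 - 1\<bar>" using w4 by simp
      ultimately have "D34 \<bar>w^2 - 1\<bar> \<le> D34 (w^2/16)" by (rule D34_anti)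
      also have "\<dots> = 8 * (1 / (\<bar>w\<bar> * sqrt \<bar>w\<bar>))" using True by (intro D34_16) auto
      finally have "ennreal (D34 \<bar>w^2 - 1\<bar>) \<le> ennreal (8 * (1 / (\<bar>w\<bar> * sqrt \<bar>w\<bar>)))" by (rule ennreal_leI)
      also have "\<dots> = 8 * ennreal (1 / (\<bar>w\<bar> * sqrt \<bar>w\<bar>))" by (subst ennreal_mult') simp_all
      also have "\<dots> = 8 * G3 w" using True by (simp add: G3_def)
      also have "\<dots> \<le> G1 w + G2 w + 8 * G3 w" by (rule add_increasing) auto
      finally show ?thesis .
    next
      case False
      show ?thesis
      proof (cases "0 \<le> w")
        case True
        have ne: "0 < \<bar>w - 1\<bar>" using w1 by (auto simp: power2_eq_square)
        have "\<bar>w - 1\<bar> * 1 \<le> \<bar>w - 1\<bar> * \<bar>w + 1\<bar>" using True by (intro mult_left_mono) auto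
        also have "\<dots> = \<bar>w^2 - 1\<bar>" by (simp add: abs_mult[symmetric] power2_eq_square algebra_simps)
        finally have "D34 \<bar>w^2 - 1\<bar> \<le> D34 \<bar>w - 1\<bar>" using ne by (intro D34_anti) auto
        then have "ennreal (D34 \<bar>w^2 - 1\<bar>) \<le> G1 w" using False True by (simp add: G1_def ennreal_leI)
        also have "\<dots> \<le> G1 w + G2 w + 8 * G3 w" by (simp add: add.assoc add_increasing2)
        finally show ?thesis .
      next
        case neg: False
        have "w \<noteq> -1"
        proof
          assume "w = -1"
          then have "w^2 = 1" by simp
          with w1 show False by simp
        qed
        then have ne: "0 < \<bar>w + 1\<bar>" by linarith
        have "\<bar>w + 1\<bar> * 1 \<le> \<bar>w + 1\<bar> * \<bar>w - 1\<bar>" using neg by (intro mult_left_mono) auto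
        also have "\<dots> = \<bar>w^2 - 1\<bar>" by (simp add: abs_mult[symmetric] power2_eq_square algebra_simps)
        finally have "D34 \<bar>w^2 - 1\<bar> \<le> D34 \<bar>w + 1\<bar>" using ne by (intro D34_anti) auto
        then have "ennreal (D34 \<bar>w^2 - 1\<bar>) \<le> G2 w" using False neg by (simp add: G2_def ennreal_leI)
        also have "\<dots> \<le> G1 w + G2 w + 8 * G3 w" by (simp add: add_increasing add_increasing2)
        finally show ?thesis .
      qed
    qed
  qed
  have "(\<integral>\<^sup>+w. ennreal (D34 \<bar>w^2 - 1\<bar>) \<partial>lborel) \<le> (\<integral>\<^sup>+w. G1 w + G2 w + 8 * G3 w \<partial>lborel)"
    by (intro nn_integral_mono pt)
  also have "\<dots> = (\<integral>\<^sup>+w. G1 w \<partial>lborel) + (\<integral>\<^sup>+w. G2 w \<partial>lborel) + 8 * (\<integral>\<^sup>+w. G3 w \<partial>lborel)"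
    by (simp add: nn_integral_add nn_integral_cmult)
  also have "\<dots> < \<infinity>"
  proof -
    have "(\<integral>\<^sup>+w. G1 w \<partial>lborel) < \<infinity>" unfolding G1_def using symA_34_fin[of 3 1] by simp
    moreover have "(\<integral>\<^sup>+w. G2 w \<partial>lborel) < \<infinity>" unfolding G2_def using symA_34_fin[of 3 "-1"] by simp
    moreover have "(\<integral>\<^sup>+w. G3 w \<partial>lborel) < \<infinity>" unfolding G3_def using tail32_fin[of 2] by simp
    ultimately show ?thesis by (simp add: ennreal_mult_less_top)
  qed
  finally show ?thesis .
qed

lemma nn_pair_snd:
  fixes F :: "real \<times> real \<Rightarrow> ennreal" assumes [measurable]: "F \<in> borel_measurable (borel \<Otimes>\<^sub>M borel)"
  shows "(\<integral>\<^sup>+p. F p \<partial>lborel) = (\<integral>\<^sup>+y. (\<integral>\<^sup>+x. F (x, y) \<partial>lborel) \<partial>lborel)"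
proof -
  have "(\<integral>\<^sup>+p. F p \<partial>lborel) = (\<integral>\<^sup>+p. F p \<partial>(lborel \<Otimes>\<^sub>M lborel))" by (simp add: lborel_prod)
  also have "\<dots> = (\<integral>\<^sup>+y. (\<integral>\<^sup>+x. F (x, y) \<partial>lborel) \<partial>lborel)"
    by (rule lborel_pair.nn_integral_snd[symmetric]) (use assms in \<open>simp add: lborel_prod borel_prod\<close>)
  finally show ?thesis .
qed

lemma nn_pair_fst:
  fixes F :: "real \<times> real \<Rightarrow> ennreal" assumes [measurable]: "F \<in> borel_measurable (borel \<Otimes>\<^sub>M borel)"
  shows "(\<integral>\<^sup>+p. F p \<partial>lborel) = (\<integral>\<^sup>+x. (\<integral>\<^sup>+y. F (x, y) \<partial>lborel) \<partial>lborel)"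
proof -
  have "(\<integral>\<^sup>+p. F p \<partial>lborel) = (\<integral>\<^sup>+p. F p \<partial>(lborel \<Otimes>\<^sub>M lborel))" by (simp add: lborel_prod)
  also have "\<dots> = (\<integral>\<^sup>+x. (\<integral>\<^sup>+y. F (x, y) \<partial>lborel) \<partial>lborel)"
    by (rule lborel.nn_integral_fst[symmetric]) (use assms in \<open>simp add: lborel_prod borel_prod\<close>)
  finally show ?thesis .
qed

lemma rot1:
  fixes Q :: "real \<times> real \<Rightarrow> ennreal"
  assumes Q[measurable]: "Q \<in> borel_measurable (borel \<Otimes>\<^sub>M borel)" and e: "e1^2 + e2^2 = 1" and e1: "e1 \<noteq> 0"
  shows "(\<integral>\<^sup>+p. Q (e1 * fst p + e2 * snd p, - e2 * fst p + e1 * snd p) \<partial>lborel) = (\<integral>\<^sup>+p. Q p \<partial>lborel)"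
proof -
  have c1: "1 / e1 \<noteq> 0" using e1 by simp
  have inner1: "(\<integral>\<^sup>+a. Q (e1 * a + e2 * b, - e2 * a + e1 * b) \<partial>lborel)
      = ennreal (1 / \<bar>e1\<bar>) * (\<integral>\<^sup>+x. Q (x, (b - e2 * x) / e1) \<partial>lborel)" for b
  proof -
    have m: "(\<lambda>a. Q (e1 * a + e2 * b, - e2 * a + e1 * b)) \<in> borel_measurable borel" by measurable
    have arg: "(e1 * (- e2 * b / e1 + 1 / e1 * x) + e2 * b, - e2 * (- e2 * b / e1 + 1 / e1 * x) + e1 * b)
         = (x, (b - e2 * x) / e1)" for x
    proof -
      have "- e2 * (- e2 * b / e1 + 1 / e1 * x) + e1 * b = (e2^2 * b - e2 * x + e1^2 * b) / e1"
        using e1 by (simp add: field_simps power2_eq_square)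
      also have "\<dots> = ((e1^2 + e2^2) * b - e2 * x) / e1" by (simp add: algebra_simps)
      also have "\<dots> = (b - e2 * x) / e1" using e by simp
      finally show ?thesis using e1 by (simp add: field_simps)
    qed
    have "(\<integral>\<^sup>+a. Q (e1 * a + e2 * b, - e2 * a + e1 * b) \<partial>lborel)
      = ennreal \<bar>1 / e1\<bar> * (\<integral>\<^sup>+x. Q (e1 * (- e2 * b / e1 + 1 / e1 * x) + e2 * b, - e2 * (- e2 * b / e1 + 1 / e1 * x) + e1 * b) \<partial>lborel)"
      by (rule nn_integral_real_affine[OF m c1])
    also have "\<dots> = ennreal (1 / \<bar>e1\<bar>) * (\<integral>\<^sup>+x. Q (x, (b - e2 * x) / e1) \<partial>lborel)"
      by (simp only: arg abs_divide abs_one)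
    finally show ?thesis .
  qed
  have inner2: "(\<integral>\<^sup>+b. Q (x, (b - e2 * x) / e1) \<partial>lborel) = ennreal \<bar>e1\<bar> * (\<integral>\<^sup>+w. Q (x, w) \<partial>lborel)" for x
  proof -
    have m: "(\<lambda>b. Q (x, (b - e2 * x) / e1)) \<in> borel_measurable borel" by measurable
    have arg: "(e2 * x + e1 * w - e2 * x) / e1 = w" for w using e1 by simp
    have "(\<integral>\<^sup>+b. Q (x, (b - e2 * x) / e1) \<partial>lborel)
      = ennreal \<bar>e1\<bar> * (\<integral>\<^sup>+w. Q (x, (e2 * x + e1 * w - e2 * x) / e1) \<partial>lborel)"
      by (rule nn_integral_real_affine[OF m e1])
    also have "\<dots> = ennreal \<bar>e1\<bar> * (\<integral>\<^sup>+w. Q (x, w) \<partial>lborel)"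
      by (simp only: arg)
    finally show ?thesis .
  qed
  have "(\<integral>\<^sup>+p. Q (e1 * fst p + e2 * snd p, - e2 * fst p + e1 * snd p) \<partial>lborel)
      = (\<integral>\<^sup>+b. (\<integral>\<^sup>+a. Q (e1 * a + e2 * b, - e2 * a + e1 * b) \<partial>lborel) \<partial>lborel)"
  proof -
    have m: "(\<lambda>p. Q (e1 * fst p + e2 * snd p, - e2 * fst p + e1 * snd p)) \<in> borel_measurable (borel \<Otimes>\<^sub>M borel)" by measurable
    show ?thesis by (subst nn_pair_snd[OF m]) simp
  qed
  also have "\<dots> = (\<integral>\<^sup>+b. ennreal (1 / \<bar>e1\<bar>) * (\<integral>\<^sup>+x. Q (x, (b - e2 * x) / e1) \<partial>lborel) \<partial>lborel)"
    by (simp only: inner1)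
  also have "\<dots> = ennreal (1 / \<bar>e1\<bar>) * (\<integral>\<^sup>+b. (\<integral>\<^sup>+x. Q (x, (b - e2 * x) / e1) \<partial>lborel) \<partial>lborel)"
    by (rule nn_integral_cmult) measurable
  also have "(\<integral>\<^sup>+b. (\<integral>\<^sup>+x. Q (x, (b - e2 * x) / e1) \<partial>lborel) \<partial>lborel)
      = (\<integral>\<^sup>+x. (\<integral>\<^sup>+b. Q (x, (b - e2 * x) / e1) \<partial>lborel) \<partial>lborel)"
  proof -
    have mF: "(\<lambda>p. Q (fst p, (snd p - e2 * fst p) / e1)) \<in> borel_measurable (lborel \<Otimes>\<^sub>M lborel)" by measurable
    show ?thesis using lborel_pair.Fubini[OF mF] by simp
  qed
  also have "\<dots> = (\<integral>\<^sup>+x. ennreal \<bar>e1\<bar> * (\<integral>\<^sup>+w. Q (x, w) \<partial>lborel) \<partial>lborel)"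
    by (simp only: inner2)
  also have "\<dots> = ennreal \<bar>e1\<bar> * (\<integral>\<^sup>+x. (\<integral>\<^sup>+w. Q (x, w) \<partial>lborel) \<partial>lborel)"
    by (rule nn_integral_cmult) measurable
  also have "(\<integral>\<^sup>+x. (\<integral>\<^sup>+w. Q (x, w) \<partial>lborel) \<partial>lborel) = (\<integral>\<^sup>+p. Q p \<partial>lborel)"
    by (rule nn_pair_fst[symmetric]) measurable
  finally show ?thesis
    using e1 by (simp add: mult.assoc[symmetric] ennreal_mult[symmetric])
qed

lemma rot2:
  fixes Q :: "real \<times> real \<Rightarrow> ennreal"
  assumes Q[measurable]: "Q \<in> borel_measurable (borel \<Otimes>\<^sub>M borel)" and e: "e1^2 + e2^2 = 1" and e2: "e2 \<noteq> 0"
  shows "(\<integral>\<^sup>+p. Q (e1 * fst p + e2 * snd p, - e2 * fst p + e1 * snd p) \<partial>lborel) = (\<integral>\<^sup>+p. Q p \<partial>lborel)"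
proof -
  have c1: "1 / e2 \<noteq> 0" using e2 by simp
  have c2: "- e2 \<noteq> 0" using e2 by simp
  have inner1: "(\<integral>\<^sup>+b. Q (e1 * a + e2 * b, - e2 * a + e1 * b) \<partial>lborel)
      = ennreal (1 / \<bar>e2\<bar>) * (\<integral>\<^sup>+x. Q (x, (e1 * x - a) / e2) \<partial>lborel)" for a
  proof -
    have m: "(\<lambda>b. Q (e1 * a + e2 * b, - e2 * a + e1 * b)) \<in> borel_measurable borel" by measurable
    have arg: "(e1 * a + e2 * (- e1 * a / e2 + 1 / e2 * x), - e2 * a + e1 * (- e1 * a / e2 + 1 / e2 * x))
         = (x, (e1 * x - a) / e2)" for x
    proof -
      have "- e2 * a + e1 * (- e1 * a / e2 + 1 / e2 * x) = (e1 * x - e2^2 * a - e1^2 * a) / e2"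
        using e2 by (simp add: field_simps power2_eq_square)
      also have "\<dots> = (e1 * x - (e1^2 + e2^2) * a) / e2" by (simp add: algebra_simps)
      also have "\<dots> = (e1 * x - a) / e2" using e by simp
      finally show ?thesis using e2 by (simp add: field_simps)
    qed
    have "(\<integral>\<^sup>+b. Q (e1 * a + e2 * b, - e2 * a + e1 * b) \<partial>lborel)
      = ennreal \<bar>1 / e2\<bar> * (\<integral>\<^sup>+x. Q (e1 * a + e2 * (- e1 * a / e2 + 1 / e2 * x), - e2 * a + e1 * (- e1 * a / e2 + 1 / e2 * x)) \<partial>lborel)"
      by (rule nn_integral_real_affine[OF m c1])
    also have "\<dots> = ennreal (1 / \<bar>e2\<bar>) * (\<integral>\<^sup>+x. Q (x, (e1 * x - a) / e2) \<partial>lborel)"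
      by (simp only: arg abs_divide abs_one)
    finally show ?thesis .
  qed
  have inner2: "(\<integral>\<^sup>+a. Q (x, (e1 * x - a) / e2) \<partial>lborel) = ennreal \<bar>e2\<bar> * (\<integral>\<^sup>+w. Q (x, w) \<partial>lborel)" for x
  proof -
    have m: "(\<lambda>a. Q (x, (e1 * x - a) / e2)) \<in> borel_measurable borel" by measurable
    have arg: "(e1 * x - (e1 * x + - e2 * w)) / e2 = w" for w using e2 by simp
    have "(\<integral>\<^sup>+a. Q (x, (e1 * x - a) / e2) \<partial>lborel)
      = ennreal \<bar>- e2\<bar> * (\<integral>\<^sup>+w. Q (x, (e1 * x - (e1 * x + - e2 * w)) / e2) \<partial>lborel)"
      by (rule nn_integral_real_affine[OF m c2])
    also have "\<dots> = ennreal \<bar>e2\<bar> * (\<integral>\<^sup>+w. Q (x, w) \<partial>lborel)"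
      by (simp only: arg abs_minus_cancel)
    finally show ?thesis .
  qed
  have "(\<integral>\<^sup>+p. Q (e1 * fst p + e2 * snd p, - e2 * fst p + e1 * snd p) \<partial>lborel)
      = (\<integral>\<^sup>+a. (\<integral>\<^sup>+b. Q (e1 * a + e2 * b, - e2 * a + e1 * b) \<partial>lborel) \<partial>lborel)"
  proof -
    have m: "(\<lambda>p. Q (e1 * fst p + e2 * snd p, - e2 * fst p + e1 * snd p)) \<in> borel_measurable (borel \<Otimes>\<^sub>M borel)" by measurable
    show ?thesis by (subst nn_pair_fst[OF m]) simp
  qed
  also have "\<dots> = (\<integral>\<^sup>+a. ennreal (1 / \<bar>e2\<bar>) * (\<integral>\<^sup>+x. Q (x, (e1 * x - a) / e2) \<partial>lborel) \<partial>lborel)"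
    by (simp only: inner1)
  also have "\<dots> = ennreal (1 / \<bar>e2\<bar>) * (\<integral>\<^sup>+a. (\<integral>\<^sup>+x. Q (x, (e1 * x - a) / e2) \<partial>lborel) \<partial>lborel)"
    by (rule nn_integral_cmult) measurable
  also have "(\<integral>\<^sup>+a. (\<integral>\<^sup>+x. Q (x, (e1 * x - a) / e2) \<partial>lborel) \<partial>lborel)
      = (\<integral>\<^sup>+x. (\<integral>\<^sup>+a. Q (x, (e1 * x - a) / e2) \<partial>lborel) \<partial>lborel)"
  proof -
    have mF: "(\<lambda>p. Q (fst p, (e1 * fst p - snd p) / e2)) \<in> borel_measurable (lborel \<Otimes>\<^sub>M lborel)" by measurable
    show ?thesis using lborel_pair.Fubini[OF mF] by simp
  qed
  also have "\<dots> = (\<integral>\<^sup>+x. ennreal \<bar>e2\<bar> * (\<integral>\<^sup>+w. Q (x, w) \<partial>lborel) \<partial>lborel)"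
    by (simp only: inner2)
  also have "\<dots> = ennreal \<bar>e2\<bar> * (\<integral>\<^sup>+x. (\<integral>\<^sup>+w. Q (x, w) \<partial>lborel) \<partial>lborel)"
    by (rule nn_integral_cmult) measurable
  also have "(\<integral>\<^sup>+x. (\<integral>\<^sup>+w. Q (x, w) \<partial>lborel) \<partial>lborel) = (\<integral>\<^sup>+p. Q p \<partial>lborel)"
    by (rule nn_pair_fst[symmetric]) measurable
  finally show ?thesis
    using e2 by (simp add: mult.assoc[symmetric] ennreal_mult[symmetric])
qed

lemma rot:
  fixes Q :: "real \<times> real \<Rightarrow> ennreal"
  assumes Q: "Q \<in> borel_measurable (borel \<Otimes>\<^sub>M borel)" and e: "e1^2 + e2^2 = 1"
  shows "(\<integral>\<^sup>+p. Q (e1 * fst p + e2 * snd p, - e2 * fst p + e1 * snd p) \<partial>lborel) = (\<integral>\<^sup>+p. Q p \<partial>lborel)"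
proof (cases "e1 = 0")
  case True
  then have "e2 \<noteq> 0" using e by auto
  then show ?thesis by (rule rot2[OF Q e])
next
  case False
  then show ?thesis by (rule rot1[OF Q e])
qed

lemma Q_fin: "(\<integral>\<^sup>+p. ennreal (Qf (fst p) (snd p)) \<partial>lborel) < \<infinity>"
proof -
  have m: "(\<lambda>p. ennreal (Qf (fst p) (snd p))) \<in> borel_measurable (borel \<Otimes>\<^sub>M borel)"
    unfolding Qf_def by measurable
  have "(\<integral>\<^sup>+p. ennreal (Qf (fst p) (snd p)) \<partial>lborel) = (\<integral>\<^sup>+w. (\<integral>\<^sup>+t. ennreal (Qf t w) \<partial>lborel) \<partial>lborel)"
    by (subst nn_pair_snd[OF m]) simp
  also have "\<dots> \<le> (\<integral>\<^sup>+w. ennreal (D34 \<bar>w^2 - 1\<bar>) * Kin \<partial>lborel)"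
  proof (rule nn_integral_mono_AE)
    have "AE w in lborel. w \<noteq> 1" by (rule AE_lborel_singleton)
    moreover have "AE w in lborel. w \<noteq> -1" by (rule AE_lborel_singleton)
    ultimately show "AE w in lborel. (\<integral>\<^sup>+t. ennreal (Qf t w) \<partial>lborel) \<le> ennreal (D34 \<bar>w^2 - 1\<bar>) * Kin"
    proof eventually_elim
      case (elim w)
      have "w^2 \<noteq> 1"
      proof
        assume "w^2 = 1"
        then have "(w - 1) * (w + 1) = 0" by (simp add: algebra_simps power2_eq_square)
        with elim show False by auto
      qed
      then have "1 < w^2 \<or> w^2 < 1" by linarith
      then show ?case using inner_big inner_small by blast
    qed
  qed
  also have "\<dots> = (\<integral>\<^sup>+w. ennreal (D34 \<bar>w^2 - 1\<bar>) \<partial>lborel) * Kin"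
    by (rule nn_integral_multc) (unfold D34_def, measurable)
  also have "\<dots> < \<infinity>" using outer_fin Kin_fin by (simp add: ennreal_mult_less_top)
  finally show ?thesis .
qed

lemma exp_half_ln: "0 < t \<Longrightarrow> exp (- (ln t / 2)) = 1 / sqrt t"
proof -
  assume t: "0 < t"
  have a: "t powr (1/2) = exp ((1/2) * ln t)" using t unfolding powr_def by simp
  have b: "t powr (1/2) = sqrt t" using t by (simp only: powr_half_sqrt less_imp_le)
  have c: "exp (- (ln t / 2)) = inverse (exp ((1/2) * ln t))"
    by (simp only: exp_minus[symmetric]) simp
  show ?thesis unfolding c a[symmetric] b by (simp only: inverse_eq_divide)
qed
lemma pm_pos: "0 < t \<Longrightarrow> pmpow eps t s = exp (s * of_real (ln t))" unfolding pmpow_def by (rule if_P)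

lemma pm_neg: "t < 0 \<Longrightarrow> pmpow eps t s = exp (of_real eps * \<i> * of_real pi * s) * exp (s * of_real (ln (- t)))"
proof -
  assume t: "t < 0"
  then have "\<not> 0 < t" by simp
  then show ?thesis unfolding pmpow_def using t by (simp only: if_False if_True)
qed

lemma pm_zero: "pmpow eps 0 s = 0" unfolding pmpow_def by simp

lemma Re1: "Re ((- 1/2 - \<i> * of_real nu) * of_real r) = - (r / 2)" by simp
lemma Re2: "Re (of_real eps * \<i> * of_real pi * (- 1/2 - \<i> * of_real nu)) = eps * pi * nu" by simp

lemma pmpow_bound:
  "cmod (pmpow eps t (- 1/2 - \<i> * of_real nu)) \<le> (1 / sqrt \<bar>t\<bar>) * max (exp (eps * pi * nu)) 1"
proof -
  have M1: "1 \<le> max (exp (eps * pi * nu)) 1" by simp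
  consider "t > 0" | "t < 0" | "t = 0" by linarith
  then show ?thesis
  proof cases
    case 1
    have "cmod (pmpow eps t (- 1/2 - \<i> * of_real nu)) = cmod (exp ((- 1/2 - \<i> * of_real nu) * of_real (ln t)))"
      by (simp only: pm_pos[OF 1])
    also have "\<dots> = exp (Re ((- 1/2 - \<i> * of_real nu) * of_real (ln t)))" by (rule norm_exp_eq_Re)
    also have "\<dots> = exp (- (ln t / 2))" by (simp only: Re1)
    also have "\<dots> = 1 / sqrt \<bar>t\<bar>" using 1 exp_half_ln[OF 1] by simp
    also have "\<dots> \<le> (1 / sqrt \<bar>t\<bar>) * max (exp (eps * pi * nu)) 1"
      using mult_left_mono[OF M1, of "1 / sqrt \<bar>t\<bar>"] by simp
    finally show ?thesis .
  next
    case 2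
    have "cmod (pmpow eps t (- 1/2 - \<i> * of_real nu))
        = cmod (exp (of_real eps * \<i> * of_real pi * (- 1/2 - \<i> * of_real nu)) * exp ((- 1/2 - \<i> * of_real nu) * of_real (ln (- t))))"
      by (simp only: pm_neg[OF 2])
    also have "\<dots> = cmod (exp (of_real eps * \<i> * of_real pi * (- 1/2 - \<i> * of_real nu))) * cmod (exp ((- 1/2 - \<i> * of_real nu) * of_real (ln (- t))))"
      by (rule norm_mult)
    also have "\<dots> = exp (eps * pi * nu) * exp (- (ln (- t) / 2))"
      by (simp only: norm_exp_eq_Re Re1 Re2)
    also have "\<dots> = exp (eps * pi * nu) * (1 / sqrt \<bar>t\<bar>)"
    proof -
      have "0 < - t" using 2 by simp
      from exp_half_ln[OF this] show ?thesis using 2 by simp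
    qed
    also have "\<dots> \<le> max (exp (eps * pi * nu)) 1 * (1 / sqrt \<bar>t\<bar>)"
      by (intro mult_right_mono) auto
    finally show ?thesis by (simp add: mult.commute)
  next
    case 3
    then show ?thesis by (simp add: pm_zero)
  qed
qed

lemma f_bound:
  fixes f :: "pt3 \<Rightarrow> complex"
  assumes c: "\<forall>l m. l \<noteq> m \<longrightarrow> cmod (f (zpar l m)) / \<bar>l - m\<bar> \<le> c / ((1 + \<bar>l\<bar>) * (1 + \<bar>m\<bar>))"
    and x0: "x0^2 = a^2 + b^2 - 1" and b: "b^2 \<noteq> 1"
  shows "cmod (f (x0, a, b)) \<le> c / sqrt (a^2 + b^2)"
proof -
  define s where "s = x0 + a"
  have s0: "s \<noteq> 0"
  proof
    assume "s = 0"
    then have "x0 = - a" by (simp add: s_def)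
    then have "x0^2 = a^2" by simp
    with x0 b show False by simp
  qed
  define l where "l = (1 + b) / s"
  define m where "m = (b - 1) / s"
  have lm: "l - m = 2 / s" unfolding l_def m_def by (simp add: diff_divide_distrib[symmetric])
  have lm0: "l \<noteq> m" using lm s0 by auto
  have key1: "s^2 + b^2 - 1 = 2 * x0 * s" using x0 unfolding s_def by (simp add: power2_eq_square algebra_simps)
  have key2: "s^2 - b^2 + 1 = 2 * a * s" using x0 unfolding s_def by (simp add: power2_eq_square algebra_simps)
  have prod: "l * m = (b^2 - 1) / s^2" unfolding l_def m_def by (simp add: power2_eq_square algebra_simps)
  have e1: "1 + l * m = x0 * (l - m)"
  proof -
    have "1 + l * m = (s^2 + b^2 - 1) / s^2" unfolding prod using s0 by (simp add: field_simps)
    also have "\<dots> = x0 * (2 / s)" unfolding key1 using s0 by (simp add: power2_eq_square field_simps)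
    finally show ?thesis unfolding lm .
  qed
  have e2: "1 - l * m = a * (l - m)"
  proof -
    have "1 - l * m = (s^2 - b^2 + 1) / s^2" unfolding prod using s0 by (simp add: field_simps)
    also have "\<dots> = a * (2 / s)" unfolding key2 using s0 by (simp add: power2_eq_square field_simps)
    finally show ?thesis unfolding lm .
  qed
  have e3: "l + m = b * (l - m)" unfolding lm l_def m_def using s0 by (simp add: field_simps)
  have zp: "zpar l m = (x0, a, b)"
    unfolding zpar_def using e1 e2 e3 lm0 by simp
  have c0: "0 \<le> c"
  proof -
    have "cmod (f (zpar 1 0)) / \<bar>1 - 0\<bar> \<le> c / ((1 + \<bar>1\<bar>) * (1 + \<bar>0\<bar>))"
      using c[rule_format, of 1 0] by simp
    then have "cmod (f (zpar 1 0)) \<le> c / 2" by simp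
    then have "0 \<le> c / 2" using norm_ge_zero order_trans by blast
    then show ?thesis by simp
  qed
  have pos: "0 < (1 + \<bar>l\<bar>) * (1 + \<bar>m\<bar>)" by (simp add: add_pos_nonneg)
  have hb: "cmod (f (x0, a, b)) / \<bar>l - m\<bar> \<le> c / ((1 + \<bar>l\<bar>) * (1 + \<bar>m\<bar>))"
    using c[rule_format, OF lm0] by (simp only: zp)
  then have fb: "cmod (f (x0, a, b)) \<le> c * \<bar>l - m\<bar> / ((1 + \<bar>l\<bar>) * (1 + \<bar>m\<bar>))"
    using lm0 by (simp add: divide_le_eq field_simps)
  have ineq: "\<bar>l - m\<bar> * sqrt (a^2 + b^2) \<le> (1 + \<bar>l\<bar>) * (1 + \<bar>m\<bar>)"
  proof -
    have ab: "a^2 + b^2 = x0^2 + 1" using x0 by simp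
    have "(l - m)^2 * (a^2 + b^2) = (x0 * (l - m))^2 + (l - m)^2"
      unfolding ab by (simp only: power_mult_distrib) (simp add: algebra_simps)
    also have "\<dots> = (1 + l^2) * (1 + m^2)" unfolding e1[symmetric] by (simp add: power2_eq_square algebra_simps)
    also have "\<dots> \<le> ((1 + \<bar>l\<bar>) * (1 + \<bar>m\<bar>))^2"
    proof -
      have "1 + l^2 \<le> (1 + \<bar>l\<bar>)^2" by (simp add: power2_eq_square algebra_simps)
      moreover have "1 + m^2 \<le> (1 + \<bar>m\<bar>)^2" by (simp add: power2_eq_square algebra_simps)
      ultimately show ?thesis by (simp add: power_mult_distrib mult_mono)
    qed
    finally have "sqrt ((l - m)^2 * (a^2 + b^2)) \<le> sqrt (((1 + \<bar>l\<bar>) * (1 + \<bar>m\<bar>))^2)"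
      by (rule real_sqrt_le_mono)
    then show ?thesis using pos by (simp add: real_sqrt_mult)
  qed
  have Spos: "0 < sqrt (a^2 + b^2)"
  proof -
    have "0 < a^2 + b^2" using x0 zero_le_power2[of x0] by linarith
    then show ?thesis by simp
  qed
  have "c * \<bar>l - m\<bar> / ((1 + \<bar>l\<bar>) * (1 + \<bar>m\<bar>)) \<le> c / sqrt (a^2 + b^2)"
  proof -
    have "\<bar>l - m\<bar> / ((1 + \<bar>l\<bar>) * (1 + \<bar>m\<bar>)) \<le> 1 / sqrt (a^2 + b^2)"
      using ineq pos Spos by (simp add: divide_le_eq le_divide_eq mult.commute)
    then show ?thesis using c0 by (metis mult_left_mono times_divide_eq_right mult_1_right)
  qed
  with fb show ?thesis by linarith
qed

lemma meas_conv: "f \<in> borel_measurable (lborel \<Otimes>\<^sub>M lborel) \<Longrightarrow> f \<in> borel_measurable (lborel :: (real \<times> real) measure)"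
  by (simp add: lborel_prod)

lemma meas_mu2: "f \<in> borel_measurable (lborel \<Otimes>\<^sub>M lborel) \<Longrightarrow> f \<in> borel_measurable mu2"
  unfolding mu2_def by (simp add: lborel_prod)

definition dens :: "real \<times> real \<Rightarrow> ennreal" where
  "dens = (\<lambda>(a, b). if a^2 + b^2 > 1 then ennreal (1 / (2 * sqrt (a^2 + b^2 - 1))) else 0)"

lemma mu2_dens: "mu2 = density lborel dens" unfolding mu2_def dens_def ..

lemma dens_meas: "dens \<in> borel_measurable lborel"
  by (rule meas_conv) (unfold dens_def, measurable)

lemma AE_snd: "AE p in (lborel :: (real \<times> real) measure). snd p \<noteq> 1 \<and> snd p \<noteq> -1"
proof (rule AE_I')
  have "emeasure (lborel \<Otimes>\<^sub>M lborel) ((UNIV :: real set) \<times> {1, -1::real}) = emeasure lborel (UNIV :: real set) * emeasure lborel {1, -1::real}"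
    by (rule lborel.emeasure_pair_measure_Times) auto
  also have "emeasure lborel {1, -1::real} = 0" by (rule emeasure_lborel_countable) auto
  finally have "emeasure (lborel \<Otimes>\<^sub>M lborel) ((UNIV :: real set) \<times> {1, -1::real}) = 0" by simp
  then show "((UNIV :: real set) \<times> {1, -1::real}) \<in> null_sets (lborel :: (real \<times> real) measure)"
    unfolding lborel_prod[symmetric] by (auto simp: null_sets_def)
  show "{x \<in> space lborel. \<not> (snd x \<noteq> 1 \<and> snd x \<noteq> - 1)} \<subseteq> (UNIV :: real set) \<times> {1, - 1::real}"
    by (auto simp: mem_Times_iff)
qed

lemma norm_int_le: "ennreal (norm (integral\<^sup>L M g)) \<le> (\<integral>\<^sup>+x. ennreal (norm (g x)) \<partial>M)"
  for g :: "'a \<Rightarrow> complex"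
proof (cases "integrable M g")
  case True
  then show ?thesis by (rule integral_norm_bound_ennreal)
next
  case False
  then show ?thesis by (simp add: not_integrable_integral_eq)
qed

lemma c_nonneg:
  assumes c: "\<forall>l m. l \<noteq> m \<longrightarrow> cmod (f (zpar l m)) / \<bar>l - m\<bar> \<le> c / ((1 + \<bar>l\<bar>) * (1 + \<bar>m\<bar>))"
  shows "0 \<le> c"
proof -
  have "cmod (f (zpar 1 0)) / \<bar>1 - 0\<bar> \<le> c / ((1 + \<bar>1\<bar>) * (1 + \<bar>0\<bar>))"
    using c[rule_format, of 1 0] by simp
  then have "cmod (f (zpar 1 0)) \<le> c / 2" by simp
  then have "0 \<le> c / 2" using norm_ge_zero order_trans by blast
  then show ?thesis by simp
qed

lemma alg3: "0 < H \<Longrightarrow> 0 < R \<Longrightarrow> 1 / (2 * H) * (K * u / R + K * v / R) = K * ((u + v) / (2 * H * R))"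
  for H R K u v :: real by (simp add: field_simps)

lemma main_bound:
  fixes f :: "pt3 \<Rightarrow> complex"
  assumes c: "\<forall>l m. l \<noteq> m \<longrightarrow> cmod (f (zpar l m)) / \<bar>l - m\<bar> \<le> c / ((1 + \<bar>l\<bar>) * (1 + \<bar>m\<bar>))"
    and xi: "xi \<in> Cplus"
  shows "cmod (FH eps nu f xi) \<le> c * enn2real (\<integral>\<^sup>+p. ennreal (Qf (fst p) (snd p)) \<partial>lborel) * fst xi powr (-1/2) * max (exp (eps * pi * nu)) 1"
proof -
  obtain z0 z1 z2 where xi_eq: "xi = (z0, z1, z2)" by (cases xi) auto
  from xi have z0: "0 < z0" and null: "z0 * z0 - z1 * z1 - z2 * z2 = 0"
    unfolding Cplus_def lform_def xi_eq by auto
  define e1 where "e1 = z1 / z0"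
  define e2 where "e2 = z2 / z0"
  have e: "e1^2 + e2^2 = 1"
  proof -
    have "z1 * z1 + z2 * z2 = z0 * z0" using null by simp
    then show ?thesis unfolding e1_def e2_def using z0 by (simp add: power_divide power2_eq_square field_simps)
  qed
  have lf: "lform (y0, a, b) xi = z0 * (y0 - (e1 * a + e2 * b))" for y0 a b
    unfolding lform_def xi_eq e1_def e2_def using z0 by (simp add: field_simps)
  define k where "k = 1 / sqrt z0"
  have k_powr: "k = z0 powr (-1/2)" using inv_sqrt_powr[of z0] z0 by (simp add: k_def)
  define M where "M = max (exp (eps * pi * nu)) 1"
  have c0: "0 \<le> c" by (rule c_nonneg[OF c])
  have k0: "0 \<le> k" unfolding k_def using z0 by simp
  have M0: "0 \<le> M" unfolding M_def by simp
  define K where "K = k * M * c"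
  have K0: "0 \<le> K" unfolding K_def k_def M_def using z0 c0 by simp
  define T where "T = (\<lambda>p::real \<times> real. e1 * fst p + e2 * snd p)"
  define W where "W = (\<lambda>p::real \<times> real. - e2 * fst p + e1 * snd p)"
  define H where "H = (\<lambda>p::real \<times> real. sqrt (fst p ^ 2 + snd p ^ 2 - 1))"
  define R where "R = (\<lambda>p::real \<times> real. sqrt (fst p ^ 2 + snd p ^ 2))"
  define bu where "bu = (\<lambda>p. K * (1 / sqrt \<bar>H p - T p\<bar>) / R p)"
  define bd where "bd = (\<lambda>p. K * (1 / sqrt \<bar>H p + T p\<bar>) / R p)"
  define s where "s = (- 1/2 - \<i> * of_real nu :: complex)"
  define gu where "gu = (\<lambda>p. pmpow eps (lform (up p) xi) s * f (up p))"
  define gd where "gd = (\<lambda>p. pmpow eps (lform (dn p) xi) s * f (dn p))"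
  have FH_eq: "FH eps nu f xi = integral\<^sup>L mu2 gu + integral\<^sup>L mu2 gd"
    unfolding FH_def intX_def gu_def gd_def s_def by simp
  have sq1: "1 / sqrt \<bar>z0 * y\<bar> = k * (1 / sqrt \<bar>y\<bar>)" for y
    unfolding k_def using z0 by (simp add: abs_mult real_sqrt_mult)
  have bnd_u: "cmod (gu p) \<le> bu p" if p1: "1 < fst p^2 + snd p^2" and p2: "snd p \<noteq> 1" "snd p \<noteq> -1" for p
  proof -
    have b2: "(snd p)^2 \<noteq> 1" using p2 by (simp add: power2_eq_1_iff)
    have upp: "up p = (H p, fst p, snd p)" unfolding up_def H_def by (cases p) simp
    have hsq: "(H p)^2 = (fst p)^2 + (snd p)^2 - 1" using p1 H_def by simp
    have lfu: "lform (up p) xi = z0 * (H p - T p)" unfolding upp lf T_def by simp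
    have pm: "cmod (pmpow eps (lform (up p) xi) s) \<le> k * (1 / sqrt \<bar>H p - T p\<bar>) * M"
      using pmpow_bound[of eps "lform (up p) xi" nu] unfolding s_def M_def lfu sq1 by simp
    have fb: "cmod (f (up p)) \<le> c / R p"
      using f_bound[OF c hsq b2] unfolding upp R_def by simp
    have "cmod (gu p) = cmod (pmpow eps (lform (up p) xi) s) * cmod (f (up p))"
      unfolding gu_def by (rule norm_mult)
    also have "\<dots> \<le> (k * (1 / sqrt \<bar>H p - T p\<bar>) * M) * (c / R p)"
      using pm fb k0 M0 by (intro mult_mono) auto
    also have "\<dots> = bu p" unfolding bu_def K_def by simp
    finally show ?thesis .
  qed
  have bnd_d: "cmod (gd p) \<le> bd p" if p1: "1 < fst p^2 + snd p^2" and p2: "snd p \<noteq> 1" "snd p \<noteq> -1" for p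
  proof -
    have b2: "(snd p)^2 \<noteq> 1" using p2 by (simp add: power2_eq_1_iff)
    have dnp: "dn p = (- H p, fst p, snd p)" unfolding dn_def H_def by (cases p) simp
    have hsq: "(- H p)^2 = (fst p)^2 + (snd p)^2 - 1" using p1 H_def by simp
    have lfd: "lform (dn p) xi = z0 * (- (H p + T p))" unfolding dnp lf T_def by simp
    have sq2: "1 / sqrt \<bar>z0 * (- (H p + T p))\<bar> = k * (1 / sqrt \<bar>H p + T p\<bar>)"
      unfolding sq1 by (simp only: abs_minus_cancel)
    have pm: "cmod (pmpow eps (lform (dn p) xi) s) \<le> k * (1 / sqrt \<bar>H p + T p\<bar>) * M"
      using pmpow_bound[of eps "lform (dn p) xi" nu] unfolding s_def M_def lfd sq2 by simp
    have fb: "cmod (f (dn p)) \<le> c / R p"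
      using f_bound[OF c hsq b2] unfolding dnp R_def by simp
    have "cmod (gd p) = cmod (pmpow eps (lform (dn p) xi) s) * cmod (f (dn p))"
      unfolding gd_def by (rule norm_mult)
    also have "\<dots> \<le> (k * (1 / sqrt \<bar>H p + T p\<bar>) * M) * (c / R p)"
      using pm fb k0 M0 by (intro mult_mono) auto
    also have "\<dots> = bd p" unfolding bd_def K_def by simp
    finally show ?thesis .
  qed
  have AEb: "AE p in mu2. ennreal (cmod (gu p)) \<le> ennreal (bu p) \<and> ennreal (cmod (gd p)) \<le> ennreal (bd p)"
    unfolding mu2_dens AE_density[OF dens_meas]
    using AE_snd
  proof eventually_elim
    case (elim p)
    show ?case
    proof
      assume "0 < dens p"
      then have p1: "1 < fst p^2 + snd p^2" unfolding dens_def by (cases p) (auto split: if_splits)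
      show "ennreal (cmod (gu p)) \<le> ennreal (bu p) \<and> ennreal (cmod (gd p)) \<le> ennreal (bd p)"
        using bnd_u[OF p1] bnd_d[OF p1] elim by (auto intro: ennreal_leI)
    qed
  qed
  have mbu: "(\<lambda>p. ennreal (bu p)) \<in> borel_measurable mu2"
    by (rule meas_mu2) (unfold bu_def H_def T_def R_def, measurable)
  have mbd: "(\<lambda>p. ennreal (bd p)) \<in> borel_measurable mu2"
    by (rule meas_mu2) (unfold bd_def H_def T_def R_def, measurable)
  have TW: "(T p)^2 + (W p)^2 = fst p^2 + snd p^2" for p
  proof -
    have "(T p)^2 + (W p)^2 = (e1^2 + e2^2) * (fst p^2 + snd p^2)"
      unfolding T_def W_def by (simp add: power2_eq_square algebra_simps)
    then show ?thesis using e by simp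
  qed
  have pw: "dens p * (ennreal (bu p) + ennreal (bd p)) = ennreal K * ennreal (Qf (T p) (W p))" for p
  proof (cases "1 < fst p^2 + snd p^2")
    case False
    then have "dens p = 0" unfolding dens_def by (cases p) auto
    moreover have "Qf (T p) (W p) = 0" using False unfolding Qf_def TW by simp
    ultimately show ?thesis by simp
  next
    case True
    have Hpos: "0 < H p" unfolding H_def using True by simp
    have Rpos: "0 < R p" unfolding R_def using True by simp
    have dp: "dens p = ennreal (1 / (2 * H p))" unfolding dens_def H_def using True by (cases p) auto
    have Qe: "Qf (T p) (W p) = (1 / sqrt \<bar>H p - T p\<bar> + 1 / sqrt \<bar>H p + T p\<bar>) / (2 * H p * R p)"
      unfolding Qf_def TW H_def R_def using True by simp
    have bu0: "0 \<le> bu p" unfolding bu_def using K0 Rpos by simp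
    have bd0: "0 \<le> bd p" unfolding bd_def using K0 Rpos by simp
    have "dens p * (ennreal (bu p) + ennreal (bd p)) = ennreal (1 / (2 * H p) * (bu p + bd p))"
    proof -
      have "ennreal (bu p) + ennreal (bd p) = ennreal (bu p + bd p)"
        using bu0 bd0 by (rule ennreal_plus[symmetric])
      moreover have "ennreal (1 / (2 * H p)) * ennreal (bu p + bd p) = ennreal (1 / (2 * H p) * (bu p + bd p))"
        by (rule ennreal_mult'[symmetric]) (use Hpos in simp)
      ultimately show ?thesis unfolding dp by simp
    qed
    also have "1 / (2 * H p) * (bu p + bd p) = K * Qf (T p) (W p)"
      unfolding bu_def bd_def Qe by (rule alg3[OF Hpos Rpos])
    also have "ennreal (K * Qf (T p) (W p)) = ennreal K * ennreal (Qf (T p) (W p))"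
      using K0 by (rule ennreal_mult')
    finally show ?thesis .
  qed
  define KQ where "KQ = (\<integral>\<^sup>+p. ennreal (Qf (fst p) (snd p)) \<partial>lborel)"
  have KQfin: "KQ < \<infinity>" unfolding KQ_def by (rule Q_fin)
  have mQ: "(\<lambda>q. ennreal (Qf (fst q) (snd q))) \<in> borel_measurable (borel \<Otimes>\<^sub>M borel)"
    unfolding Qf_def by measurable
  have rotQ: "(\<integral>\<^sup>+p. ennreal (Qf (T p) (W p)) \<partial>lborel) = KQ"
    using rot[OF mQ e] unfolding KQ_def T_def W_def by simp
  have "ennreal (cmod (FH eps nu f xi)) \<le> ennreal (cmod (integral\<^sup>L mu2 gu) + cmod (integral\<^sup>L mu2 gd))"
    unfolding FH_eq by (rule ennreal_leI[OF norm_triangle_ineq])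
  also have "\<dots> = ennreal (cmod (integral\<^sup>L mu2 gu)) + ennreal (cmod (integral\<^sup>L mu2 gd))"
    by (rule ennreal_plus) auto
  also have "\<dots> \<le> (\<integral>\<^sup>+p. ennreal (cmod (gu p)) \<partial>mu2) + (\<integral>\<^sup>+p. ennreal (cmod (gd p)) \<partial>mu2)"
    by (intro add_mono norm_int_le)
  also have "\<dots> \<le> (\<integral>\<^sup>+p. ennreal (bu p) \<partial>mu2) + (\<integral>\<^sup>+p. ennreal (bd p) \<partial>mu2)"
  proof (intro add_mono nn_integral_mono_AE)
    show "AE x in mu2. ennreal (cmod (gu x)) \<le> ennreal (bu x)" using AEb by eventually_elim auto
    show "AE x in mu2. ennreal (cmod (gd x)) \<le> ennreal (bd x)" using AEb by eventually_elim auto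
  qed
  also have "\<dots> = (\<integral>\<^sup>+p. ennreal (bu p) + ennreal (bd p) \<partial>mu2)"
    by (rule nn_integral_add[symmetric, OF mbu mbd])
  also have "\<dots> = (\<integral>\<^sup>+p. dens p * (ennreal (bu p) + ennreal (bd p)) \<partial>lborel)"
  proof -
    have m: "(\<lambda>p. ennreal (bu p) + ennreal (bd p)) \<in> borel_measurable lborel"
      by (rule meas_conv) (unfold bu_def bd_def H_def T_def R_def, measurable)
    show ?thesis unfolding mu2_dens by (rule nn_integral_density[OF dens_meas m])
  qed
  also have "\<dots> = (\<integral>\<^sup>+p. ennreal K * ennreal (Qf (T p) (W p)) \<partial>lborel)"
    by (simp only: pw)
  also have "\<dots> = ennreal K * (\<integral>\<^sup>+p. ennreal (Qf (T p) (W p)) \<partial>lborel)"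
  proof (rule nn_integral_cmult)
    show "(\<lambda>p. ennreal (Qf (T p) (W p))) \<in> borel_measurable lborel"
      by (rule meas_conv) (unfold Qf_def T_def W_def, measurable)
  qed
  also have "\<dots> = ennreal K * ennreal (enn2real KQ)"
  proof -
    have KQtop: "KQ < top" using KQfin by simp
    show ?thesis unfolding rotQ by (simp only: ennreal_enn2real[OF KQtop])
  qed
  also have "\<dots> = ennreal (K * enn2real KQ)" by (rule ennreal_mult'[symmetric, OF K0])
  finally have fin0: "ennreal (cmod (FH eps nu f xi)) \<le> ennreal (K * enn2real KQ)" .
  have nn: "0 \<le> K * enn2real KQ" using K0 by simp
  have fin: "cmod (FH eps nu f xi) \<le> K * enn2real KQ"
    using fin0 ennreal_le_iff[OF nn] by blast
  have fx: "fst xi = z0" by (simp add: xi_eq)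
  have "K * enn2real KQ = c * enn2real KQ * fst xi powr (-1/2) * max (exp (eps * pi * nu)) 1"
    unfolding K_def k_powr M_def fx by (simp only: ac_simps)
  then show ?thesis using fin unfolding KQ_def by (simp only:)
qed

theorem proposition9:
  assumes "f \<in> Hreg"
  shows "\<exists>Cst. \<forall>eps \<in> {1, -1::real}. \<forall>xi \<in> Cplus. \<forall>nu::real.
           cmod (FH eps nu f xi) \<le> Cst * fst xi powr (-1/2) * max (exp (eps * pi * nu)) 1"
proof -
  from assms obtain c where c: "\<forall>l m. l \<noteq> m \<longrightarrow> cmod (f (zpar l m)) / \<bar>l - m\<bar> \<le> c / ((1 + \<bar>l\<bar>) * (1 + \<bar>m\<bar>))"
    unfolding Hreg_def by blast
  show ?thesis
    by (rule exI[of _ "c * enn2real (\<integral>\<^sup>+p. ennreal (Qf (fst p) (snd p)) \<partial>lborel)"])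
       (intro ballI allI main_bound[OF c])
qed

end
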